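(* Let $\mathcal{X}'\subseteq\mathcal{X}$ be a set of pairwise backward kinematically inseparable observations and let $\mathcal{X}'_1,\mathcal{X}'_2\subset\mathcal{X}'$. For any policies $\pi_1,\pi_2\in\Upsilon$, $$\frac{\mathbb{P}_{\pi_1}(\mathcal{X}'_1)}{\mathbb{P}_{\pi_2}(\mathcal{X}'_1)}=\frac{\mathbb{P}_{\pi_1}(\mathcal{X}'_2)}{\mathbb{P}_{\pi_2}(\mathcal{X}'_2)}.$$
   Context: Block MDP: horizon $H$; finite latent states $\mathcal{S}=\sqcup_h\mathcal{S}_h$; countable observations $\mathcal{X}=\sqcup_h\mathcal{X}_h$; finite actions $\mathcal{A}$; start distribution $\mu\in\Delta(\mathcal{S}_1)$; transitions $T(\cdot\mid s,a)\in\Delta(\mathcal{S}_{h+1})$ for $s\in\mathcal{S}_h$; emissions $q(\cdot\mid s)\in\Delta(\mathcal{X}_h)$ with pairwise disjoint supports, decoder $g^\star$. Episodes: $s_1\sim\mu$, $x_h\sim q(\cdot\mid s_h)$, agent chooses $a_h$, $s_{h+1}\sim T(\cdot\mid s_h,a_h)$. $\Upsilon$ is the set of all policies $\mathcal{X}\to\Delta(\mathcal{A})$ (by layering these include all non-stationary policies); $\mathbb{P}_\pi(\mathcal{Y})$ is the probability that the trajectory under $\pi$ visits an observation in $\mathcal{Y}$. Observation transitions $T(x'\mid x,a)=q(x'\mid g^\star(x'))T(g^\star(x')\mid g^\star(x),a)$; for full-support $u\in\Delta(\mathcal{X}\times\mathcal{A})$, $\mathbb{P}_u(x,a\mid x')=\frac{T(x'\mid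 x,a)u(x,a)}{\sum_{\tilde x,\tilde a}T(x'\mid\tilde x,\tilde a)u(\tilde x,\tilde a)}$; $x_1',x_2'$ are backward kinematically inseparable if $\mathbb{P}_u(\cdot\mid x_1')=\mathbb{P}_u(\cdot\mid x_2')$ for every full-support $u$. *)

theory Defs
  imports "HOL-Probability.Probability"
begin

text \<open>States of type 's (finite), observations of type 'x
 (countable), actions of type 'a (finite). ls / lx give the layer of a state / observation.\<close>

definition block_mdp ::
  "nat \<Rightarrow> ('s::finite \<Rightarrow> nat) \<Rightarrow> ('x::countable \<Rightarrow> nat) \<Rightarrow> 's pmf
     \<Rightarrow> ('s \<Rightarrow> 'a::finite \<Rightarrow> 's pmf) \<Rightarrow> ('s \<Rightarrow> 'x pmf) \<Rightarrow> bool" where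
  "block_mdp H ls lx mu T q \<longleftrightarrow>
     H \<ge> 1 \<and>
     (\<forall>s. ls s \<in> {1..H}) \<and> (\<forall>x. lx x \<in> {1..H}) \<and>
     set_pmf mu \<subseteq> {s. ls s = 1} \<and>
     (\<forall>s a. ls s < H \<longrightarrow> set_pmf (T s a) \<subseteq> {s'. ls s' = Suc (ls s)}) \<and>
     (\<forall>s. set_pmf (q s) \<subseteq> {x. lx x = ls s}) \<and>
     (\<forall>s s'. s \<noteq> s' \<longrightarrow> set_pmf (q s) \<inter> set_pmf (q s') = {})"

definition decoder :: "('s \<Rightarrow> 'x pmf) \<Rightarrow> 'x \<Rightarrow> 's" where
  "decoder q x = (SOME s. x \<in> set_pmf (q s))"

fun traj :: "('s \<Rightarrow> 'x pmf) \<Rightarrow> ('s \<Rightarrow> 'a \<Rightarrow> 's pmf) \<Rightarrow> ('x \<Rightarrow> 'a pmf) \<Rightarrow> nat \<Rightarrow> 's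
               \<Rightarrow> 'x list pmf" where
  "traj q T pol 0 s = return_pmf []"
| "traj q T pol (Suc n) s =
     bind_pmf (q s) (\<lambda>x. bind_pmf (pol x) (\<lambda>a. bind_pmf (T s a) (\<lambda>s'.
       map_pmf (\<lambda>xs. x # xs) (traj q T pol n s'))))"

definition visit_prob :: "nat \<Rightarrow> 's pmf \<Rightarrow> ('s \<Rightarrow> 'a \<Rightarrow> 's pmf) \<Rightarrow> ('s \<Rightarrow> 'x pmf)
      \<Rightarrow> ('x \<Rightarrow> 'a pmf) \<Rightarrow> 'x set \<Rightarrow> real" where
  "visit_prob H mu T q pol Y =
     measure_pmf.prob (bind_pmf mu (traj q T pol H)) {xs. \<exists>x\<in>set xs. x \<in> Y}"

text \<open>Observation transitions T(x'|x,a) = q(x'|g x') T(g x'|g x,a) (zero when g x is in the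
 last layer, where T(.|s,a) is not defined by the model).\<close>
definition obs_trans :: "('s \<Rightarrow> nat) \<Rightarrow> ('s \<Rightarrow> 'a \<Rightarrow> 's pmf) \<Rightarrow> ('s \<Rightarrow> 'x pmf)
      \<Rightarrow> 'x \<Rightarrow> 'x \<Rightarrow> 'a \<Rightarrow> real" where
  "obs_trans ls T q x' x a =
     (if ls (decoder q x') = Suc (ls (decoder q x))
      then pmf (q (decoder q x')) x' * pmf (T (decoder q x) a) (decoder q x') else 0)"

definition back_cond :: "('s \<Rightarrow> nat) \<Rightarrow> ('s \<Rightarrow> 'a \<Rightarrow> 's pmf) \<Rightarrow> ('s \<Rightarrow> 'x pmf)
      \<Rightarrow> ('x \<times> 'a) pmf \<Rightarrow> 'x \<Rightarrow> 'x \<times> 'a \<Rightarrow> real" where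
  "back_cond ls T q u x' xa =
     obs_trans ls T q x' (fst xa) (snd xa) * pmf u xa /
     measure_pmf.expectation u (\<lambda>(y, b). obs_trans ls T q x' y b)"

definition backward_KI :: "('s \<Rightarrow> nat) \<Rightarrow> ('s \<Rightarrow> 'a \<Rightarrow> 's pmf) \<Rightarrow> ('s \<Rightarrow> 'x pmf)
      \<Rightarrow> 'x \<Rightarrow> 'x \<Rightarrow> bool" where
  "backward_KI ls T q x1 x2 \<longleftrightarrow>
     (\<forall>u :: ('x \<times> 'a) pmf. set_pmf u = UNIV \<longrightarrow>
        (\<forall>xa. back_cond ls T q u x1 xa = back_cond ls T q u x2 xa))"

end

theory Submission
  imports Defs
begin

lemma prob_bind: "measure_pmf.prob (bind_pmf M f) A = (\<integral>x. measure_pmf.prob (f x) A \<partial>M)"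
  unfolding measure_pmf_bind
  by (rule measure_pmf.measure_bind[where N="count_space UNIV"])
     (auto intro: measure_pmf_in_subprob_algebra)

lemma pos_lemma: fixes f :: "'a \<Rightarrow> real" and M :: "'a pmf"
  assumes "\<And>x. 0 \<le> f x" "\<And>x. f x \<le> 1" "(\<integral>x. f x \<partial>M) = 0" "x \<in> set_pmf M" shows "f x = 0"
proof -
  have int: "integrable M f"
    by (rule measure_pmf.integrable_const_bound[where B=1]) (use assms in auto)
  have "AE y in M. f y = 0"
    using integral_nonneg_eq_0_iff_AE[OF int] assms by auto
  thus ?thesis using assms(4) by (simp add: AE_measure_pmf_iff)
qed

lemma int_cong: "(\<And>x. x \<in> set_pmf M \<Longrightarrow> f x = g x) \<Longrightarrow> (\<integral>x. f x \<partial>M) = (\<integral>x. (g x::real) \<partial>M)"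
  by (intro integral_cong_AE) (auto simp: AE_measure_pmf_iff)

definition V where
  "V q T pol n s Y = measure_pmf.prob (traj q T pol n s) {xs. \<exists>x\<in>set xs. x \<in> Y}"

lemma V0: "V q T pol 0 s Y = 0"
  by (simp add: V_def)

lemma V_Suc: "V q T pol (Suc n) s Y =
  (\<integral>x. (if x \<in> Y then 1 else (\<integral>a. (\<integral>s'. V q T pol n s' Y \<partial>T s a) \<partial>pol x)) \<partial>q s)"
proof -
  have pre: "(\<lambda>xs. x # xs) -` {xs. \<exists>x\<in>set xs. x \<in> Y} =
     (if x \<in> Y then UNIV else {xs. \<exists>x\<in>set xs. x \<in> Y})" for x
    by auto
  show ?thesis
    unfolding V_def traj.simps prob_bind measure_map_pmf pre
    by (intro int_cong) auto
qed

definition Wt :: "('s::finite \<Rightarrow> 'x pmf) \<Rightarrow> 'x set \<Rightarrow> ('s \<Rightarrow> real) \<Rightarrow> 'x set \<Rightarrow> real" where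
  "Wt q X' e Y = (\<Sum>s'\<in>UNIV. (if \<exists>x\<in>X'. x \<in> set_pmf (q s') then e s' else 0) * measure_pmf.prob (q s') Y)"

lemma visit_V: "visit_prob H mu T q pol Y = (\<integral>s. V q T pol H s Y \<partial>mu)"
  unfolding visit_prob_def V_def prob_bind ..


context
  fixes H :: nat and ls :: "'s::finite \<Rightarrow> nat" and lx :: "'x::countable \<Rightarrow> nat"
    and mu :: "'s pmf" and T :: "'s \<Rightarrow> 'a::finite \<Rightarrow> 's pmf" and q :: "'s \<Rightarrow> 'x pmf"
  assumes bm: "block_mdp H ls lx mu T q"
begin

lemma ls_range: "1 \<le> ls s" "ls s \<le> H"
  using bm unfolding block_mdp_def by auto

lemma mu_layer: "s \<in> set_pmf mu \<Longrightarrow> ls s = 1"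
  using bm unfolding block_mdp_def by auto

lemma T_layer: "ls s < H \<Longrightarrow> s' \<in> set_pmf (T s a) \<Longrightarrow> ls s' = Suc (ls s)"
proof -
  have "\<forall>s a. ls s < H \<longrightarrow> set_pmf (T s a) \<subseteq> {s'. ls s' = Suc (ls s)}"
    using bm unfolding block_mdp_def by simp
  thus "ls s < H \<Longrightarrow> s' \<in> set_pmf (T s a) \<Longrightarrow> ls s' = Suc (ls s)" by blast
qed

lemma dec: "x \<in> set_pmf (q s) \<Longrightarrow> decoder q x = s"
proof -
  assume x: "x \<in> set_pmf (q s)"
  then have "x \<in> set_pmf (q (decoder q x))"
    unfolding decoder_def by (rule someI)
  moreover have "\<forall>s s'. s \<noteq> s' \<longrightarrow> set_pmf (q s) \<inter> set_pmf (q s') = {}"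
    using bm unfolding block_mdp_def by simp
  ultimately show ?thesis using x by blast
qed

lemma dec_surj: "\<exists>y. decoder q y = s"
proof -
  obtain y where "y \<in> set_pmf (q s)" using set_pmf_not_empty[of "q s"] by blast
  thus ?thesis using dec by blast
qed

lemma V_zero:
  assumes cl: "\<And>s a s'. P s \<Longrightarrow> ls s < H \<Longrightarrow> s' \<in> set_pmf (T s a) \<Longrightarrow> P s'"
    and nb: "\<And>s. P s \<Longrightarrow> set_pmf (q s) \<inter> Y = {}"
  shows "P s \<Longrightarrow> ls s + n = Suc H \<Longrightarrow> V q T pol n s Y = 0"
proof (induction n arbitrary: s)
  case 0
  then show ?case by (simp add: V0)
next
  case (Suc m)
  have "V q T pol (Suc m) s Y = (\<integral>x. (\<integral>a. (\<integral>s'. 0 \<partial>T s a) \<partial>pol x) \<partial>q s)"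
    unfolding V_Suc
  proof (intro int_cong)
    fix x assume x: "x \<in> set_pmf (q s)"
    then have "x \<notin> Y" using nb[OF Suc.prems(1)] by blast
    moreover have "(\<integral>s'. V q T pol m s' Y \<partial>T s a) = (\<integral>s'. 0 \<partial>T s a)" for a
    proof (intro int_cong)
      fix s' assume s': "s' \<in> set_pmf (T s a)"
      show "V q T pol m s' Y = 0"
      proof (cases "ls s < H")
        case True
        have "ls s' + m = Suc H" using T_layer[OF True s'] Suc.prems(2) by simp
        then show ?thesis using Suc.IH[OF cl[OF Suc.prems(1) True s']] by blast
      next
        case False
        then have "m = 0" using Suc.prems(2) ls_range[of s] by simp
        then show ?thesis by (simp add: V0)
      qed
    qed
    ultimately show "(if x \<in> Y then 1 else (\<integral>a. (\<integral>s'. V q T pol m s' Y \<partial>T s a) \<partial>pol x))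
       = (\<integral>a. (\<integral>s'. 0 \<partial>T s a) \<partial>pol x)" by simp
  qed
  then show ?case by simp
qed


lemma caseA_V:
  assumes noinc: "\<And>x s a. x \<in> Y \<Longrightarrow> ls (decoder q x) = Suc (ls s) \<Longrightarrow>
      pmf (q (decoder q x)) x * pmf (T s a) (decoder q x) = 0"
    and s1: "ls s = 1"
  shows "V q T pol H s Y = measure_pmf.prob (q s) Y"
proof -
  obtain m where Hm: "H = Suc m" using ls_range[of s] s1 by (cases H) auto
  define P where "P s \<longleftrightarrow> 2 \<le> ls s \<and> (\<exists>sp a. ls s = Suc (ls sp) \<and> s \<in> set_pmf (T sp a))" for s
  have cl: "P s'" if "P s" "ls s < H" "s' \<in> set_pmf (T s a)" for s a s'
    using that T_layer[OF that(2,3)] unfolding P_def by auto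
  have nb: "set_pmf (q s) \<inter> Y = {}" if "P s" for s
  proof (rule ccontr)
    assume "set_pmf (q s) \<inter> Y \<noteq> {}"
    then obtain x where x: "x \<in> set_pmf (q s)" "x \<in> Y" by blast
    from that obtain sp a where sp: "ls s = Suc (ls sp)" "s \<in> set_pmf (T sp a)" unfolding P_def by blast
    have d: "decoder q x = s" using dec[OF x(1)] .
    have "pmf (q s) x * pmf (T sp a) s = 0" using noinc[OF x(2), of sp a] d sp by simp
    moreover have "pmf (q s) x > 0" "pmf (T sp a) s > 0" using x(1) sp(2) by (auto simp: pmf_positive)
    ultimately show False by simp
  qed
  have "V q T pol (Suc m) s Y = (\<integral>x. indicator Y x \<partial>q s)"
    unfolding V_Suc
  proof (intro int_cong)
    fix x assume x: "x \<in> set_pmf (q s)"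
    have "(\<integral>s'. V q T pol m s' Y \<partial>T s a) = (\<integral>s'. 0 \<partial>T s a)" for a
    proof (intro int_cong)
      fix s' assume s': "s' \<in> set_pmf (T s a)"
      show "V q T pol m s' Y = 0"
      proof (cases "ls s < H")
        case True
        have l: "ls s' = Suc (ls s)" using T_layer[OF True s'] .
        have Ps': "P s'" unfolding P_def using l s1 s' by (intro conjI exI[of _ s] exI[of _ a]) auto
        have lm: "ls s' + m = Suc H" using l s1 Hm by simp
        show ?thesis using cl nb Ps' lm by (rule V_zero)
      next
        case False
        then have "m = 0" using Hm s1 by simp
        then show ?thesis by (simp add: V0)
      qed
    qed
    then show "(if x \<in> Y then 1 else (\<integral>a. (\<integral>s'. V q T pol m s' Y \<partial>T s a) \<partial>pol x))
       = indicator Y x" by (simp add: indicator_def)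
  qed
  also have "\<dots> = measure_pmf.prob (q s) Y" by simp
  finally show ?thesis using Hm by simp
qed


context
  fixes X' :: "'x set" and h :: nat and s0 :: 's and e :: "'s \<Rightarrow> real"
  assumes B1: "\<And>x. x \<in> X' \<Longrightarrow> ls (decoder q x) = h"
    and B2: "2 \<le> h" and B4: "h \<le> H"
    and B3: "\<And>s' x s a. x \<in> X' \<Longrightarrow> x \<in> set_pmf (q s') \<Longrightarrow> Suc (ls s) = h \<Longrightarrow>
              pmf (T s a) s' = e s' * pmf (T s a) s0"
begin

lemma B_later: "Y \<subseteq> X' \<Longrightarrow> h < ls s \<Longrightarrow> ls s + n = Suc H \<Longrightarrow> V q T pol n s Y = 0"
proof -
  assume Y: "Y \<subseteq> X'" and hs: "h < ls s" and n: "ls s + n = Suc H"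
  define P where "P s \<longleftrightarrow> h < ls s" for s
  have cl: "P s'" if "P s" "ls s < H" "s' \<in> set_pmf (T s a)" for s a s'
    using that T_layer[OF that(2,3)] unfolding P_def by auto
  have nb: "set_pmf (q s) \<inter> Y = {}" if "P s" for s
  proof (rule ccontr)
    assume "set_pmf (q s) \<inter> Y \<noteq> {}"
    then obtain x where x: "x \<in> set_pmf (q s)" "x \<in> Y" by blast
    have "ls (decoder q x) = h" using B1 x(2) Y by blast
    then show False using dec[OF x(1)] that unfolding P_def by simp
  qed
  have Ps: "P s" using hs unfolding P_def .
  show ?thesis using cl nb Ps n by (rule V_zero)
qed

lemma B_at: "Y \<subseteq> X' \<Longrightarrow> ls s = h \<Longrightarrow> ls s + n = Suc H \<Longrightarrow> V q T pol n s Y = measure_pmf.prob (q s) Y"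
proof -
  assume Y: "Y \<subseteq> X'" and hs: "ls s = h" and n: "ls s + n = Suc H"
  obtain m where nm: "n = Suc m" using n ls_range[of s] by (cases n) auto
  have "V q T pol (Suc m) s Y = (\<integral>x. indicator Y x \<partial>q s)"
    unfolding V_Suc
  proof (intro int_cong)
    fix x assume x: "x \<in> set_pmf (q s)"
    have "(\<integral>s'. V q T pol m s' Y \<partial>T s a) = (\<integral>s'. 0 \<partial>T s a)" for a
    proof (intro int_cong)
      fix s' assume s': "s' \<in> set_pmf (T s a)"
      show "V q T pol m s' Y = 0"
      proof (cases "ls s < H")
        case True
        have l: "ls s' = Suc (ls s)" using T_layer[OF True s'] .
        show ?thesis by (rule B_later) (use Y l hs n nm in auto)
      next
        case False
        then have "m = 0" using n nm ls_range[of s] by simp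
        then show ?thesis by (simp add: V0)
      qed
    qed
    then show "(if x \<in> Y then 1 else (\<integral>a. (\<integral>s'. V q T pol m s' Y \<partial>T s a) \<partial>pol x))
       = indicator Y x" by (simp add: indicator_def)
  qed
  also have "\<dots> = measure_pmf.prob (q s) Y" by simp
  finally show ?thesis using nm by simp
qed


lemma B_pre: "Y \<subseteq> X' \<Longrightarrow> Suc (ls s) = h \<Longrightarrow> ls s + n = Suc H \<Longrightarrow>
  V q T pol n s Y = (\<integral>x. (\<integral>a. pmf (T s a) s0 \<partial>pol x) \<partial>q s) * Wt q X' e Y"
proof -
  assume Y: "Y \<subseteq> X'" and hs: "Suc (ls s) = h" and n: "ls s + n = Suc H"
  obtain m where nm: "n = Suc m" using n ls_range[of s] by (cases n) auto
  have lsH: "ls s < H" using hs B4 by simp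
  have inner: "(\<integral>s'. V q T pol m s' Y \<partial>T s a) = pmf (T s a) s0 * Wt q X' e Y" for a
  proof -
    have "(\<integral>s'. V q T pol m s' Y \<partial>T s a) = (\<integral>s'. measure_pmf.prob (q s') Y \<partial>T s a)"
    proof (intro int_cong)
      fix s' assume s': "s' \<in> set_pmf (T s a)"
      have l: "ls s' = Suc (ls s)" using T_layer[OF lsH s'] .
      show "V q T pol m s' Y = measure_pmf.prob (q s') Y"
        by (rule B_at) (use Y l hs n nm in auto)
    qed
    also have "\<dots> = (\<Sum>s'\<in>UNIV. measure_pmf.prob (q s') Y * pmf (T s a) s')"
      by (rule integral_measure_pmf_real) auto
    also have "\<dots> = (\<Sum>s'\<in>UNIV. pmf (T s a) s0 * ((if \<exists>x\<in>X'. x \<in> set_pmf (q s') then e s' else 0) * measure_pmf.prob (q s') Y))"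
    proof (intro sum.cong refl)
      fix s'
      show "measure_pmf.prob (q s') Y * pmf (T s a) s' =
        pmf (T s a) s0 * ((if \<exists>x\<in>X'. x \<in> set_pmf (q s') then e s' else 0) * measure_pmf.prob (q s') Y)"
      proof (cases "\<exists>x\<in>X'. x \<in> set_pmf (q s')")
        case True
        then obtain x where "x \<in> X'" "x \<in> set_pmf (q s')" by blast
        from B3[OF this hs] True show ?thesis by simp
      next
        case False
        then have "set_pmf (q s') \<inter> Y = {}" using Y by blast
        then have "measure_pmf.prob (q s') Y = 0" by (simp add: measure_pmf_zero_iff)
        then show ?thesis by simp
      qed
    qed
    also have "\<dots> = pmf (T s a) s0 * Wt q X' e Y"
      unfolding Wt_def by (simp add: sum_distrib_left)
    finally show ?thesis .
  qed
  have "V q T pol (Suc m) s Y = (\<integral>x. (\<integral>a. pmf (T s a) s0 * Wt q X' e Y \<partial>pol x) \<partial>q s)"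
    unfolding V_Suc
  proof (intro int_cong)
    fix x assume x: "x \<in> set_pmf (q s)"
    have "x \<notin> Y"
    proof
      assume "x \<in> Y"
      then have "ls (decoder q x) = h" using B1 Y by blast
      then show False using dec[OF x] hs by simp
    qed
    then show "(if x \<in> Y then 1 else (\<integral>a. (\<integral>s'. V q T pol m s' Y \<partial>T s a) \<partial>pol x))
       = (\<integral>a. pmf (T s a) s0 * Wt q X' e Y \<partial>pol x)" using inner by simp
  qed
  also have "\<dots> = (\<integral>x. (\<integral>a. pmf (T s a) s0 \<partial>pol x) \<partial>q s) * Wt q X' e Y"
    by simp
  finally show ?thesis using nm by simp
qed

lemma B_gen: "ls s < h \<Longrightarrow> ls s + n = Suc H \<Longrightarrow> \<exists>K. \<forall>Y. Y \<subseteq> X' \<longrightarrow> V q T pol n s Y = K * Wt q X' e Y"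
proof (induction n arbitrary: s)
  case 0
  then show ?case using ls_range[of s] by simp
next
  case (Suc m)
  show ?case
  proof (cases "Suc (ls s) = h")
    case True
    then show ?thesis using B_pre[OF _ True Suc.prems(2)] by blast
  next
    case False
    then have lt: "Suc (ls s) < h" using Suc.prems(1) by simp
    then have lsH: "ls s < H" using B4 by simp
    define Kf where "Kf s' = (SOME K. \<forall>Y. Y \<subseteq> X' \<longrightarrow> V q T pol m s' Y = K * Wt q X' e Y)" for s'
    have Kf: "V q T pol m s' Y = Kf s' * Wt q X' e Y" if "s' \<in> set_pmf (T s a)" "Y \<subseteq> X'" for s' a Y
    proof -
      have l: "ls s' = Suc (ls s)" using T_layer[OF lsH that(1)] .
      have "\<exists>K. \<forall>Y. Y \<subseteq> X' \<longrightarrow> V q T pol m s' Y = K * Wt q X' e Y"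
        using Suc.IH[of s'] l lt Suc.prems(2) by simp
      then have "\<forall>Y. Y \<subseteq> X' \<longrightarrow> V q T pol m s' Y = Kf s' * Wt q X' e Y"
        unfolding Kf_def by (rule someI_ex)
      then show ?thesis using that(2) by blast
    qed
    have "V q T pol (Suc m) s Y = (\<integral>x. (\<integral>a. (\<integral>s'. Kf s' \<partial>T s a) \<partial>pol x) \<partial>q s) * Wt q X' e Y"
      if Y: "Y \<subseteq> X'" for Y
    proof -
      have "V q T pol (Suc m) s Y = (\<integral>x. (\<integral>a. (\<integral>s'. Kf s' * Wt q X' e Y \<partial>T s a) \<partial>pol x) \<partial>q s)"
        unfolding V_Suc
      proof (intro int_cong)
        fix x assume x: "x \<in> set_pmf (q s)"
        have "x \<notin> Y"
        proof
          assume "x \<in> Y"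
          then have "ls (decoder q x) = h" using B1 Y by blast
          then show False using dec[OF x] lt by simp
        qed
        moreover have "(\<integral>s'. V q T pol m s' Y \<partial>T s a) = (\<integral>s'. Kf s' * Wt q X' e Y \<partial>T s a)" for a
          by (intro int_cong) (rule Kf[OF _ Y])
        ultimately show "(if x \<in> Y then 1 else (\<integral>a. (\<integral>s'. V q T pol m s' Y \<partial>T s a) \<partial>pol x))
           = (\<integral>a. (\<integral>s'. Kf s' * Wt q X' e Y \<partial>T s a) \<partial>pol x)" by simp
      qed
      also have "\<dots> = (\<integral>x. (\<integral>a. (\<integral>s'. Kf s' \<partial>T s a) \<partial>pol x) \<partial>q s) * Wt q X' e Y"
        by simp
      finally show ?thesis .
    qed
    then show ?thesis by blast
  qed
qed

lemma B_visit: "\<exists>K. \<forall>Y. Y \<subseteq> X' \<longrightarrow> visit_prob H mu T q pol Y = K * Wt q X' e Y"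
proof -
  define Kf where "Kf s = (SOME K. \<forall>Y. Y \<subseteq> X' \<longrightarrow> V q T pol H s Y = K * Wt q X' e Y)" for s
  have Kf: "V q T pol H s Y = Kf s * Wt q X' e Y" if "s \<in> set_pmf mu" "Y \<subseteq> X'" for s Y
  proof -
    have l: "ls s = 1" using mu_layer[OF that(1)] .
    have "\<exists>K. \<forall>Y. Y \<subseteq> X' \<longrightarrow> V q T pol H s Y = K * Wt q X' e Y"
      by (rule B_gen) (use l B2 in auto)
    then have "\<forall>Y. Y \<subseteq> X' \<longrightarrow> V q T pol H s Y = Kf s * Wt q X' e Y"
      unfolding Kf_def by (rule someI_ex)
    then show ?thesis using that(2) by blast
  qed
  have "visit_prob H mu T q pol Y = (\<integral>s. Kf s \<partial>mu) * Wt q X' e Y" if "Y \<subseteq> X'" for Y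
  proof -
    have "visit_prob H mu T q pol Y = (\<integral>s. Kf s * Wt q X' e Y \<partial>mu)"
      unfolding visit_V by (intro int_cong) (rule Kf[OF _ that])
    also have "\<dots> = (\<integral>s. Kf s \<partial>mu) * Wt q X' e Y" by simp
    finally show ?thesis .
  qed
  then show ?thesis by blast
qed
end

end


lemma obs_trans_bounds: "0 \<le> obs_trans ls T q x y b" "obs_trans ls T q x y b \<le> 1"
  unfolding obs_trans_def by (auto intro: mult_le_one pmf_le_1)

theorem mainTheorem6:
  fixes H :: nat and ls :: "'s::finite \<Rightarrow> nat" and lx :: "'x::countable \<Rightarrow> nat"
    and mu :: "'s pmf" and T :: "'s \<Rightarrow> 'a::finite \<Rightarrow> 's pmf" and q :: "'s \<Rightarrow> 'x pmf"
    and X' X1 X2 :: "'x set" and pi1 pi2 :: "'x \<Rightarrow> 'a pmf"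
  assumes "block_mdp H ls lx mu T q"
    and "\<forall>x1\<in>X'. \<forall>x2\<in>X'. backward_KI ls T q x1 x2"
    and "X1 \<subseteq> X'" and "X2 \<subseteq> X'"
    and "visit_prob H mu T q pi2 X1 \<noteq> 0" and "visit_prob H mu T q pi2 X2 \<noteq> 0"
  shows "visit_prob H mu T q pi1 X1 / visit_prob H mu T q pi2 X1 =
         visit_prob H mu T q pi1 X2 / visit_prob H mu T q pi2 X2"
proof -
  note bm = assms(1)
  define u :: "('x \<times> 'a) pmf" where "u = map_pmf from_nat (geometric_pmf (1/2))"
  have u_full: "set_pmf u = UNIV"
  proof -
    have "surj (from_nat :: nat \<Rightarrow> 'x \<times> 'a)"
      by (rule surjI[where f=to_nat]) (rule from_nat_to_nat)
    then show ?thesis unfolding u_def by (simp add: set_pmf_geometric)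
  qed
  have pu: "pmf u z > 0" for z using u_full by (simp add: pmf_positive)
  define Z where "Z x = measure_pmf.expectation u (\<lambda>(y, b). obs_trans ls T q x y b)" for x
  have f_zero: "obs_trans ls T q x y b = 0" if "Z x = 0" for x y b
  proof -
    have "(\<lambda>(y, b). obs_trans ls T q x y b) (y, b) = 0"
      by (rule pos_lemma[where M=u]) (use that in \<open>auto simp: Z_def u_full obs_trans_bounds split: prod.split\<close>)
    thus ?thesis by simp
  qed
  have bc: "back_cond ls T q u x (y, b) = obs_trans ls T q x y b * pmf u (y, b) / Z x" for x y b
    unfolding back_cond_def Z_def by simp
  show ?thesis
  proof (cases "\<exists>x0\<in>X'. Z x0 \<noteq> 0")
    case True
    then obtain x0 where x0: "x0 \<in> X'" "Z x0 \<noteq> 0" by blast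
    obtain y0 b0 where yb0: "obs_trans ls T q x0 y0 b0 \<noteq> 0"
    proof (rule ccontr)
      assume "\<not> thesis"
      then have "\<forall>y b. obs_trans ls T q x0 y b = 0" using that by blast
      then have "(\<lambda>(y, b). obs_trans ls T q x0 y b) = (\<lambda>_. 0)" by auto
      then have "Z x0 = 0" unfolding Z_def by simp
      then show False using x0 by simp
    qed
    define s0 where "s0 = decoder q x0"
    define h where "h = ls s0"
    have h_eq: "h = Suc (ls (decoder q y0))"
      using yb0 unfolding h_def s0_def obs_trans_def by (auto split: if_splits)
    have B2: "2 \<le> h" using h_eq ls_range[OF bm, of "decoder q y0"] by simp
    have B4: "h \<le> H" using ls_range[OF bm, of s0] unfolding h_def by simp
    have prp: "Z x \<noteq> 0 \<and> (\<forall>y b. obs_trans ls T q x y b = (Z x / Z x0) * obs_trans ls T q x0 y b)"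
      if x: "x \<in> X'" for x
    proof -
      have "backward_KI ls T q x x0" using assms(2) x x0(1) by blast
      then have KI0: "\<forall>u :: ('x \<times> 'a) pmf. set_pmf u = UNIV \<longrightarrow>
        (\<forall>xa. back_cond ls T q u x xa = back_cond ls T q u x0 xa)"
        unfolding backward_KI_def .
      have KI: "\<forall>xa. back_cond ls T q u x xa = back_cond ls T q u x0 xa"
        using KI0 u_full by simp
      have nz0: "back_cond ls T q u x0 (y0, b0) \<noteq> 0"
        unfolding bc using yb0 x0(2) pu[of "(y0, b0)"] by simp
      have Zx: "Z x \<noteq> 0"
      proof
        assume "Z x = 0"
        then have "back_cond ls T q u x (y0, b0) = 0" unfolding bc by simp
        then show False using KI nz0 by simp
      qed
      have "obs_trans ls T q x y b = (Z x / Z x0) * obs_trans ls T q x0 y b" for y b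
      proof -
        have e: "obs_trans ls T q x y b * pmf u (y, b) / Z x = obs_trans ls T q x0 y b * pmf u (y, b) / Z x0"
          using KI[rule_format, of "(y, b)"] unfolding bc .
        have "pmf u (y, b) \<noteq> 0" using pu[of "(y, b)"] by simp
        with e Zx x0(2) show ?thesis by (simp add: field_simps)
      qed
      with Zx show ?thesis by blast
    qed
    have B1: "ls (decoder q x) = h" if "x \<in> X'" for x
    proof -
      have "Z x / Z x0 \<noteq> 0" using prp[OF that] x0(2) by simp
      then have "obs_trans ls T q x y0 b0 \<noteq> 0" using prp[OF that] yb0 by simp
      then have "ls (decoder q x) = Suc (ls (decoder q y0))" unfolding obs_trans_def by (auto split: if_splits)
      then show ?thesis using h_eq by simp
    qed
    define e where "e s' = (let x = SOME x. x \<in> X' \<and> x \<in> set_pmf (q s') in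
       (Z x / Z x0) * pmf (q s0) x0 / pmf (q s') x)" for s'
    have B3: "pmf (T s a) s' = e s' * pmf (T s a) s0"
      if "x \<in> X'" "x \<in> set_pmf (q s')" "Suc (ls s) = h" for s' x s a
    proof -
      define x' where "x' = (SOME x. x \<in> X' \<and> x \<in> set_pmf (q s'))"
      have x': "x' \<in> X'" "x' \<in> set_pmf (q s')"
        using someI[of "\<lambda>x. x \<in> X' \<and> x \<in> set_pmf (q s')", OF conjI[OF that(1,2)]]
        unfolding x'_def by auto
      have d': "decoder q x' = s'" using dec[OF bm x'(2)] .
      have ls': "ls s' = h" using B1[OF x'(1)] d' by simp
      obtain y where y: "decoder q y = s" using dec_surj[OF bm] by blast
      have o1: "obs_trans ls T q x' y a = pmf (q s') x' * pmf (T s a) s'"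
        unfolding obs_trans_def d' y using ls' that(3) by simp
      have o2: "obs_trans ls T q x0 y a = pmf (q s0) x0 * pmf (T s a) s0"
        unfolding obs_trans_def y s0_def[symmetric] using that(3) h_def by simp
      have eq: "pmf (q s') x' * pmf (T s a) s' = (Z x' / Z x0) * (pmf (q s0) x0 * pmf (T s a) s0)"
      proof -
        have "obs_trans ls T q x' y a = (Z x' / Z x0) * obs_trans ls T q x0 y a"
          using prp[OF x'(1)] by blast
        then show ?thesis unfolding o1 o2 .
      qed
      have pos: "pmf (q s') x' > 0" using x'(2) by (simp add: pmf_positive)
      have ee: "e s' = (Z x' / Z x0) * pmf (q s0) x0 / pmf (q s') x'"
        unfolding e_def x'_def Let_def by simp
      have eq2: "Z x0 * (pmf (q s') x' * pmf (T s a) s') = Z x' * (pmf (q s0) x0 * pmf (T s a) s0)"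
        using eq x0(2) by (simp add: field_simps)
      have "e s' * pmf (T s a) s0 = (Z x' * (pmf (q s0) x0 * pmf (T s a) s0)) / (Z x0 * pmf (q s') x')"
        unfolding ee by simp
      also have "\<dots> = (Z x0 * (pmf (q s') x' * pmf (T s a) s')) / (Z x0 * pmf (q s') x')"
        unfolding eq2 ..
      also have "\<dots> = pmf (T s a) s'" using pos x0(2) by simp
      finally show ?thesis by simp
    qed
    from B_visit[OF bm B1 B2 B4 B3, where pol=pi1] obtain K1 where
      K1a: "\<forall>Y. Y \<subseteq> X' \<longrightarrow> visit_prob H mu T q pi1 Y = K1 * Wt q X' e Y" ..
    from B_visit[OF bm B1 B2 B4 B3, where pol=pi2] obtain K2 where
      K2a: "\<forall>Y. Y \<subseteq> X' \<longrightarrow> visit_prob H mu T q pi2 Y = K2 * Wt q X' e Y" ..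
    have r: "visit_prob H mu T q pi1 Y / visit_prob H mu T q pi2 Y = K1 / K2"
      if Y: "Y \<subseteq> X'" and nz: "visit_prob H mu T q pi2 Y \<noteq> 0" for Y
    proof -
      have e1: "visit_prob H mu T q pi1 Y = K1 * Wt q X' e Y" using K1a Y by blast
      have e2: "visit_prob H mu T q pi2 Y = K2 * Wt q X' e Y" using K2a Y by blast
      have "Wt q X' e Y \<noteq> 0" using nz e2 by simp
      then show ?thesis unfolding e1 e2 by simp
    qed
    show ?thesis using r[OF assms(3,5)] r[OF assms(4,6)] by simp
  next
    case False
    then have Z0: "\<And>x. x \<in> X' \<Longrightarrow> Z x = 0" by blast
    have same: "visit_prob H mu T q pol Y = (\<integral>s. measure_pmf.prob (q s) Y \<partial>mu)" if Y: "Y \<subseteq> X'" for pol Y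
    proof -
      have noinc: "pmf (q (decoder q x)) x * pmf (T s a) (decoder q x) = 0"
        if "x \<in> Y" "ls (decoder q x) = Suc (ls s)" for x s a
      proof -
        obtain y where y: "decoder q y = s" using dec_surj[OF bm] by blast
        have "obs_trans ls T q x y a = 0" using f_zero Z0 Y that(1) by blast
        then show ?thesis unfolding obs_trans_def y using that(2) by simp
      qed
      show ?thesis unfolding visit_V
        by (intro int_cong caseA_V[OF bm noinc] mu_layer[OF bm])
    qed
    show ?thesis using assms(5,6) unfolding same[OF assms(3)] same[OF assms(4)] by simp
  qed
qed

end
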